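(* Let $\mathcal{G}=\{U^g\mid g\in G=\mathbb{Z}_2^{\times(n-k)}\}$ be the stabilizer group of an $[[n,k]]$ Pauli stabilizer code, indexed so that $U^e=I^{\otimes n}$ and $U^gU^h=U^{gh}$. There exists a subset $R$ consisting of $n-k$ of the $n$ physical qubits such that 1. $\mathcal{G}_R=\{U^g_R\mid g\in G\}$ is a faithful, unitary, possibly projective representation of $G$ on $\mathcal{H}_R=(\mathbb{C}^2)^{\otimes(n-k)}$ satisfying $U^g_RU^{g'}_R=c(g,g')U^{gg'}_R$ with $c(g,g')\in\{\pm1,\pm i\}$, and 2. there exists a seed state $\ket{e}_R\in\mathcal{H}_R$ such that $\{\ket{g}_R=U^g_R\ket{e}_R\mid g\in G\}$ is an orthonormal basis of $\mathcal{H}_R$ that transforms as $U^g_R\ket{g'}_R=c(g,g')\ket{gg'}_R$.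
   Context: $\mathcal{P}_n$ is the $n$-qubit Pauli group (operators $i^\lambda O_1\otimes\cdots\otimes O_n$, $\lambda\in\{0,1,2,3\}$, $O_j\in\{I,X,Y,Z\}$). An $[[n,k]]$ Pauli stabilizer code is given by a faithful unitary representation $g\mapsto U^g\in\mathcal{P}_n$ of $G=\mathbb{Z}_2^{\times(n-k)}$ on $(\mathbb{C}^2)^{\otimes n}$ with $-I\notin\mathcal{G}$. For a subset $R$ of $n-k$ qubits with complement $S$ and a Pauli string $U^g=i^\lambda O_1\otimes\cdots\otimes O_n$, $U^g_R$ denotes the Pauli string $\bigotimes_{a\in R}O_a$ on the qubits of $R$ with the prefactor removed (equivalently $U^g_R=2^{-k}\mathrm{Tr}_S[\pi_S(U^g)]$, where $\pi_S$ replaces the letters on $S$ by $I$ and removes the prefactor). The phases $c(g,g')$ are defined by $U^g_RU^{g'}_R=c(g,g')U^{gg'}_R$. *)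

theory Defs
  imports Complex_Main
begin

text \<open>Elements of Z_2^m are represented as subsets of {..<m} (indicator of the
  nonzero coordinates); the group law is symmetric difference, the identity is {}.\<close>

definition Z2grp :: "nat \<Rightarrow> nat set set" where
  "Z2grp m = Pow {..<m}"

definition gmul :: "nat set \<Rightarrow> nat set \<Rightarrow> nat set" where
  "gmul g h = (g - h) \<union> (h - g)"

datatype pauli = PI | PX | PY | PZ

text \<open>A Pauli string is a pair (lambda, w) standing for i^lambda times the tensor
  product of the letters w a over the qubits a < n (letters at a >= n are I).\<close>

type_synonym pstring = "nat \<times> (nat \<Rightarrow> pauli)"

definition valid_pstring :: "nat \<Rightarrow> pstring \<Rightarrow> bool" where
  "valid_pstring n P \<longleftrightarrow> fst P < 4 \<and> (\<forall>a. n \<le> a \<longrightarrow> snd P a = PI)"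

text \<open>States of qubits are functions from computational basis configurations
  (bit assignments nat \<Rightarrow> bool) to amplitudes. The states of the qubits in Q are
  those supported on configurations that vanish outside Q.\<close>

type_synonym state = "(nat \<Rightarrow> bool) \<Rightarrow> complex"

definition cfgs :: "nat set \<Rightarrow> (nat \<Rightarrow> bool) set" where
  "cfgs Q = {x. \<forall>a. x a \<longrightarrow> a \<in> Q}"

definition states_on :: "nat set \<Rightarrow> state set" where
  "states_on Q = {\<psi>. \<forall>x. x \<notin> cfgs Q \<longrightarrow> \<psi> x = 0}"

definition inner_on :: "nat set \<Rightarrow> state \<Rightarrow> state \<Rightarrow> complex" where
  "inner_on Q \<phi> \<psi> = (\<Sum>x\<in>cfgs Q. cnj (\<phi> x) * \<psi> x)"

text \<open>Single-qubit letter acting on basis state |b>: P|b> = letter_ph P b |flip b>.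
  X|b> = |1-b>, Z|b> = (-1)^b |b>, Y = iXZ: Y|0> = i|1>, Y|1> = -i|0>.\<close>

fun letter_ph :: "pauli \<Rightarrow> bool \<Rightarrow> complex" where
  "letter_ph PI b = 1"
| "letter_ph PX b = 1"
| "letter_ph PZ b = (if b then -1 else 1)"
| "letter_ph PY b = (if b then -\<i> else \<i>)"

definition letter_flips :: "pauli \<Rightarrow> bool" where
  "letter_flips P \<longleftrightarrow> P = PX \<or> P = PY"

definition flip_cfg :: "(nat \<Rightarrow> pauli) \<Rightarrow> (nat \<Rightarrow> bool) \<Rightarrow> (nat \<Rightarrow> bool)" where
  "flip_cfg w x = (\<lambda>a. if letter_flips (w a) then \<not> x a else x a)"

definition word_ph :: "nat \<Rightarrow> (nat \<Rightarrow> pauli) \<Rightarrow> (nat \<Rightarrow> bool) \<Rightarrow> complex" where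
  "word_ph n w x = (\<Prod>a<n. letter_ph (w a) (x a))"

text \<open>Operator of the Pauli string on n qubits: P|x> = i^lambda word_ph(x) |flip x>,
  hence (P psi)(y) = i^lambda word_ph(flip y) psi(flip y).\<close>

definition pauli_op :: "nat \<Rightarrow> pstring \<Rightarrow> state \<Rightarrow> state" where
  "pauli_op n P \<psi> = (\<lambda>y. \<i> ^ fst P * word_ph n (snd P) (flip_cfg (snd P) y)
                          * \<psi> (flip_cfg (snd P) y))"

definition identity_pstring :: pstring where
  "identity_pstring = (0, \<lambda>a. PI)"

definition minus_identity_pstring :: pstring where
  "minus_identity_pstring = (2, \<lambda>a. PI)"

definition restrict_pstring :: "nat set \<Rightarrow> pstring \<Rightarrow> pstring" where
  "restrict_pstring R P = (0, \<lambda>a. if a \<in> R then snd P a else PI)"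

end

theory Submission
  imports Defs "HOL-Library.Function_Algebras"
begin


fun lmul :: "pauli \<Rightarrow> pauli \<Rightarrow> pauli" where
  "lmul PI q = q"
| "lmul p PI = p"
| "lmul PX PX = PI" | "lmul PY PY = PI" | "lmul PZ PZ = PI"
| "lmul PX PY = PZ" | "lmul PY PX = PZ"
| "lmul PX PZ = PY" | "lmul PZ PX = PY"
| "lmul PY PZ = PX" | "lmul PZ PY = PX"

fun lc :: "pauli \<Rightarrow> pauli \<Rightarrow> complex" where
  "lc PX PY = \<i>" | "lc PY PX = -\<i>"
| "lc PY PZ = \<i>" | "lc PZ PY = -\<i>"
| "lc PZ PX = \<i>" | "lc PX PZ = -\<i>"
| "lc p q = 1"

definition fl :: "pauli \<Rightarrow> bool \<Rightarrow> bool" where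
  "fl p b = (if letter_flips p then \<not> b else b)"

lemma site_mul: "letter_ph p (fl p b) * letter_ph q (fl q (fl p b)) = lc p q * letter_ph (lmul p q) (fl (lmul p q) b)"
  by (cases p; cases q; cases b; simp add: fl_def letter_flips_def)

lemma fl_mul: "fl q (fl p b) = fl (lmul p q) b"
  by (cases p; cases q; cases b; simp add: fl_def letter_flips_def)



definition wmul :: "(nat \<Rightarrow> pauli) \<Rightarrow> (nat \<Rightarrow> pauli) \<Rightarrow> (nat \<Rightarrow> pauli)" where
  "wmul w w' = (\<lambda>a. lmul (w a) (w' a))"

definition pc :: "nat \<Rightarrow> (nat \<Rightarrow> pauli) \<Rightarrow> (nat \<Rightarrow> pauli) \<Rightarrow> complex" where
  "pc n w w' = (\<Prod>a<n. lc (w a) (w' a))"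

lemma flip_cfg_fl: "flip_cfg w x = (\<lambda>a. fl (w a) (x a))"
  by (simp add: flip_cfg_def fl_def)

lemma flip_cfg_mul: "flip_cfg w' (flip_cfg w x) = flip_cfg (wmul w w') x"
  by (simp add: flip_cfg_fl wmul_def fl_mul)

lemma flip_cfg_inv[simp]: "flip_cfg w (flip_cfg w x) = x"
  by (auto simp: flip_cfg_def)

lemma word_mul: "word_ph n w (flip_cfg w y) * word_ph n w' (flip_cfg w' (flip_cfg w y))
   = pc n w w' * word_ph n (wmul w w') (flip_cfg (wmul w w') y)"
  by (simp add: word_ph_def pc_def flip_cfg_fl wmul_def site_mul prod.distrib[symmetric])

lemma op_lam: "pauli_op n (l, w) \<psi> = (\<lambda>y. \<i> ^ l * pauli_op n (0, w) \<psi> y)"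
  by (simp add: pauli_op_def mult.assoc)

lemma op_comp0: "pauli_op n (0, w) (pauli_op n (0, w') \<psi>) = (\<lambda>y. pc n w w' * pauli_op n (0, wmul w w') \<psi> y)"
proof
  fix y
  have "pauli_op n (0, w) (pauli_op n (0, w') \<psi>) y =
     (word_ph n w (flip_cfg w y) * word_ph n w' (flip_cfg w' (flip_cfg w y))) * \<psi> (flip_cfg w' (flip_cfg w y))"
    by (simp add: pauli_op_def mult.assoc)
  also have "\<dots> = pc n w w' * pauli_op n (0, wmul w w') \<psi> y"
    unfolding word_mul by (simp add: pauli_op_def flip_cfg_mul)
  finally show "pauli_op n (0, w) (pauli_op n (0, w') \<psi>) y = pc n w w' * pauli_op n (0, wmul w w') \<psi> y" .
qed

lemma letter_ph_nz[simp]: "letter_ph p b \<noteq> 0"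
  by (cases p; cases b; simp)

lemma word_ph_nz[simp]: "word_ph n w x \<noteq> 0"
  by (simp add: word_ph_def)

lemma letter_det: "letter_flips p = letter_flips q \<Longrightarrow>
   letter_ph p True * letter_ph q False = letter_ph q True * letter_ph p False \<Longrightarrow> p = q"
  by (cases p; cases q; simp add: letter_flips_def)

lemma word_split: "a < n \<Longrightarrow> word_ph n w x = letter_ph (w a) (x a) * (\<Prod>c\<in>{..<n}-{a}. letter_ph (w c) (x c))"
  unfolding word_ph_def by (simp add: prod.remove)

lemma extract_word:
  assumes v1: "\<forall>a. n \<le> a \<longrightarrow> w a = PI" and v2: "\<forall>a. n \<le> a \<longrightarrow> w' a = PI"
    and nz: "\<alpha> \<noteq> 0"
    and eq: "\<And>\<psi>. (\<lambda>y. \<alpha> * pauli_op n (0, w) \<psi> y) = (\<lambda>y. \<beta> * pauli_op n (0, w') \<psi> y)"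
  shows "w = w' \<and> \<alpha> = \<beta>"
proof -
  have E: "\<alpha> * pauli_op n (0, w) \<psi> y = \<beta> * pauli_op n (0, w') \<psi> y" for \<psi> y
    using eq[of \<psi>] by metis
  have fl_eq: "flip_cfg w' y = flip_cfg w y" for y
  proof (rule ccontr)
    assume ne: "flip_cfg w' y \<noteq> flip_cfg w y"
    have "\<alpha> * pauli_op n (0, w) (\<lambda>z. if z = flip_cfg w y then 1 else 0) y = \<alpha> * word_ph n w (flip_cfg w y)"
      by (simp add: pauli_op_def mult.assoc)
    moreover have "\<beta> * pauli_op n (0, w') (\<lambda>z. if z = flip_cfg w y then 1 else 0) y = 0"
      using ne by (simp add: pauli_op_def mult.assoc)
    ultimately show False using E[of "\<lambda>z. if z = flip_cfg w y then 1 else 0" y] nz by simp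
  qed
  have ph: "\<alpha> * word_ph n w x = \<beta> * word_ph n w' x" for x
  proof -
    let ?y = "flip_cfg w x"
    have "flip_cfg w' ?y = x" using fl_eq[of ?y] by simp
    then show ?thesis using E[of "\<lambda>z. if z = x then 1 else 0" ?y] by (simp add: pauli_op_def mult.assoc)
  qed
  have flips: "letter_flips (w a) = letter_flips (w' a)" for a
  proof -
    have "flip_cfg w' (\<lambda>_. False) a = flip_cfg w (\<lambda>_. False) a" using fl_eq by simp
    then show ?thesis by (simp add: flip_cfg_def split: if_splits)
  qed
  have weq: "w a = w' a" for a
  proof (cases "a < n")
    case True
    define P where "P = (\<Prod>c\<in>{..<n}-{a}. letter_ph (w c) False)"
    define P' where "P' = (\<Prod>c\<in>{..<n}-{a}. letter_ph (w' c) False)"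
    have P0: "P \<noteq> 0" by (simp add: P_def)
    have "\<alpha> * word_ph n w ((\<lambda>_. False)(a := b)) = \<beta> * word_ph n w' ((\<lambda>_. False)(a := b))" for b
      by (rule ph)
    moreover have "(\<Prod>c\<in>{..<n}-{a}. letter_ph (v c) (((\<lambda>_. False)(a := b)) c)) = (\<Prod>c\<in>{..<n}-{a}. letter_ph (v c) False)" for v b
      by (rule prod.cong) auto
    ultimately have h: "\<alpha> * (letter_ph (w a) b * P) = \<beta> * (letter_ph (w' a) b * P')" for b
      unfolding word_split[OF True, of w] word_split[OF True, of w'] P_def P'_def
      by (metis fun_upd_same)
    have "\<alpha> * P * (letter_ph (w a) True * letter_ph (w' a) False - letter_ph (w' a) True * letter_ph (w a) False) = 0"
    proof -
      have "\<alpha> * P * (letter_ph (w a) True * letter_ph (w' a) False - letter_ph (w' a) True * letter_ph (w a) False)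
        = (\<alpha> * (letter_ph (w a) True * P)) * letter_ph (w' a) False - letter_ph (w' a) True * (\<alpha> * (letter_ph (w a) False * P))"
        by (simp add: algebra_simps)
      also have "\<dots> = 0" unfolding h by (simp add: algebra_simps)
      finally show ?thesis .
    qed
    then have "letter_ph (w a) True * letter_ph (w' a) False = letter_ph (w' a) True * letter_ph (w a) False"
      using nz P0 by simp
    then show ?thesis using letter_det flips by blast
  next
    case False then show ?thesis using v1 v2 by simp
  qed
  then have "w = w'" by auto
  moreover have "\<alpha> = \<beta>" using ph[of x] \<open>w = w'\<close> by simp
  ultimately show ?thesis by simp
qed



definition xb :: "pauli \<Rightarrow> bool" where "xb p = letter_flips p"
definition zb :: "pauli \<Rightarrow> bool" where "zb p = (p = PZ \<or> p = PY)"
definition anti :: "pauli \<Rightarrow> pauli \<Rightarrow> bool" where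
  "anti p q = ((xb p \<and> zb q) \<noteq> (zb p \<and> xb q))"

lemma lc_swap: "lc p q = (if anti p q then -1 else 1) * lc q p"
  by (cases p; cases q; simp add: anti_def xb_def zb_def letter_flips_def)
lemma lmul_comm: "lmul p q = lmul q p"
  by (cases p; cases q; simp)
lemma xb_mul[simp]: "xb (lmul p q) = (xb p \<noteq> xb q)"
  by (cases p; cases q; simp add: xb_def letter_flips_def)
lemma zb_mul[simp]: "zb (lmul p q) = (zb p \<noteq> zb q)"
  by (cases p; cases q; simp add: zb_def)
lemma anti_mul: "anti (lmul p q) r = (anti p r \<noteq> anti q r)"
  by (cases p; cases q; cases r; simp add: anti_def xb_def zb_def letter_flips_def)
lemma lmul_self[simp]: "lmul p p = PI" by (cases p; simp)
lemma lmul_PI2[simp]: "lmul p PI = p" by (cases p; simp)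
lemma lc_self[simp]: "lc p p = 1" by (cases p; simp)
lemma lc_nz[simp]: "lc p q \<noteq> 0" by (cases p; cases q; simp)
lemma letter_eqI: "xb p = xb q \<Longrightarrow> zb p = zb q \<Longrightarrow> p = q"
  by (cases p; cases q; simp add: xb_def zb_def letter_flips_def)
lemma xb_PI[simp]: "\<not> xb PI" and zb_PI[simp]: "\<not> zb PI"
  by (simp_all add: xb_def zb_def letter_flips_def)
lemma anti_Z: "anti p PZ = xb p" and anti_X: "anti p PX = zb p"
  by (cases p; simp add: anti_def xb_def zb_def letter_flips_def)+
lemma anti_PI[simp]: "\<not> anti p PI" and anti_PI1[simp]: "\<not> anti PI p"
  by (simp_all add: anti_def)
lemma anti_sym: "anti p q = anti q p" by (auto simp: anti_def)

lemma pc_nz[simp]: "pc n w w' \<noteq> 0" by (simp add: pc_def)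

lemma pc_swap: "pc n w w' = (-1) ^ card {a\<in>{..<n}. anti (w a) (w' a)} * pc n w' w"
proof -
  have "pc n w w' = (\<Prod>a<n. (if anti (w a) (w' a) then -1 else 1)) * pc n w' w"
    unfolding pc_def by (subst lc_swap) (simp add: prod.distrib)
  also have "(\<Prod>a<n. (if anti (w a) (w' a) then -1 else (1::complex))) = (-1) ^ card {a\<in>{..<n}. anti (w a) (w' a)}"
    by (simp add: prod.If_cases Int_def)
  finally show ?thesis .
qed

lemma pc_comm_even: "pc n w w' = pc n w' w \<Longrightarrow> even (card {a\<in>{..<n}. anti (w a) (w' a)})"
proof -
  assume h: "pc n w w' = pc n w' w"
  have "(-1::complex) ^ card {a\<in>{..<n}. anti (w a) (w' a)} = 1"
    using pc_swap[of n w w'] h by simp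
  then show ?thesis by (metis neg_one_odd_power one_neq_neg_one)
qed

definition sd :: "'a set \<Rightarrow> 'a set \<Rightarrow> 'a set" where "sd s t = (s - t) \<union> (t - s)"

lemma subspace_pivot:
  assumes "finite Q"
  shows "S \<subseteq> Pow Q \<Longrightarrow> {} \<in> S \<Longrightarrow> (\<forall>s\<in>S. \<forall>t\<in>S. sd s t \<in> S) \<Longrightarrow>
     \<exists>R \<subseteq> Q. bij_betw (\<lambda>s. s \<inter> R) S (Pow R)"
  using assms
proof (induction Q arbitrary: S rule: finite_induct)
  case empty
  then have "S = {{}}" by auto
  then show ?case by (intro exI[of _ "{}"]) (auto simp: bij_betw_def)
next
  case (insert q Q0)
  define T where "T = (\<lambda>s. s - {q}) ` S"
  have T1: "T \<subseteq> Pow Q0" using insert.prems(1) insert.hyps(2) by (auto simp: T_def)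
  have T2: "{} \<in> T" using insert.prems(2) by (force simp: T_def)
  have T3: "\<forall>s\<in>T. \<forall>t\<in>T. sd s t \<in> T"
  proof (intro ballI)
    fix s t assume "s \<in> T" "t \<in> T"
    then obtain s' t' where "s' \<in> S" "t' \<in> S" "s = s' - {q}" "t = t' - {q}" by (auto simp: T_def)
    then have "sd s t = sd s' t' - {q}" by (auto simp: sd_def)
    then show "sd s t \<in> T" using insert.prems(3) \<open>s' \<in> S\<close> \<open>t' \<in> S\<close> by (auto simp: T_def)
  qed
  obtain R0 where R0: "R0 \<subseteq> Q0" "bij_betw (\<lambda>s. s \<inter> R0) T (Pow R0)"
    using insert.IH[OF T1 T2 T3] by blast
  have qR0: "q \<notin> R0" using R0(1) insert.hyps(2) by auto
  show ?case
  proof (cases "inj_on (\<lambda>s. s - {q}) S")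
    case True
    then have b1: "bij_betw (\<lambda>s. s - {q}) S T" by (simp add: bij_betw_def T_def)
    have "bij_betw ((\<lambda>s. s \<inter> R0) \<circ> (\<lambda>s. s - {q})) S (Pow R0)"
      by (rule bij_betw_trans[OF b1 R0(2)])
    moreover have "((\<lambda>s. s \<inter> R0) \<circ> (\<lambda>s. s - {q})) = (\<lambda>s. s \<inter> R0)" using qR0 by auto
    ultimately show ?thesis using R0(1) by (intro exI[of _ R0]) auto
  next
    case False
    then obtain s t where st: "s \<in> S" "t \<in> S" "s \<noteq> t" "s - {q} = t - {q}" by (auto simp: inj_on_def)
    then have "sd s t = {q}" by (auto simp: sd_def)
    then have qS: "{q} \<in> S" using insert.prems(3) st by metis
    let ?R = "insert q R0"
    have inj: "inj_on (\<lambda>s. s \<inter> ?R) S"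
    proof (rule inj_onI)
      fix s t assume s: "s \<in> S" and t: "t \<in> S" and e: "s \<inter> ?R = t \<inter> ?R"
      have "(s - {q}) \<inter> R0 = (t - {q}) \<inter> R0" using e qR0 by blast
      moreover have "s - {q} \<in> T" "t - {q} \<in> T" using s t by (auto simp: T_def)
      ultimately have "s - {q} = t - {q}" using R0(2) by (auto simp: bij_betw_def inj_on_def)
      moreover have "(q \<in> s) = (q \<in> t)" using e by blast
      ultimately show "s = t" by blast
    qed
    have img: "(\<lambda>s. s \<inter> ?R) ` S = Pow ?R"
    proof
      show "(\<lambda>s. s \<inter> ?R) ` S \<subseteq> Pow ?R" by auto
    next
      show "Pow ?R \<subseteq> (\<lambda>s. s \<inter> ?R) ` S"
      proof
        fix A assume A: "A \<in> Pow ?R"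
        then have "A - {q} \<in> Pow R0" by auto
        then have "A - {q} \<in> (\<lambda>s. s \<inter> R0) ` T" using R0(2) by (simp add: bij_betw_def)
        then obtain t where t: "t \<in> T" "t \<inter> R0 = A - {q}" by (metis imageE)
        then obtain s where s: "s \<in> S" "t = s - {q}" by (auto simp: T_def)
        show "A \<in> (\<lambda>s. s \<inter> ?R) ` S"
        proof (cases "(q \<in> s) = (q \<in> A)")
          case True
          then have "s \<inter> ?R = A" using t s A qR0 by blast
          then show ?thesis using s by blast
        next
          case False
          have "sd s {q} \<in> S" using insert.prems(3) s qS by blast
          moreover have "sd s {q} \<inter> ?R = A" using t s A qR0 False by (auto simp: sd_def)
          ultimately show ?thesis by blast
        qed
      qed
    qed
    show ?thesis using inj img R0(1) by (intro exI[of _ ?R]) (auto simp: bij_betw_def)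
  qed
qed



lemma sd_self[simp]: "sd g g = {}" by (auto simp: sd_def)
lemma sd_empty[simp]: "sd g {} = g" "sd {} g = g" by (auto simp: sd_def)
lemma sd_eq_empty: "sd g h = {} \<longleftrightarrow> g = h" by (auto simp: sd_def)
lemma sd_assoc: "sd (sd a b) c = sd a (sd b c)" by (auto simp: sd_def)
lemma sd_comm: "sd a b = sd b a" by (auto simp: sd_def)
lemma sd_cancel: "sd a (sd a b) = b" by (auto simp: sd_def)

lemma pauli_select:
  fixes G :: "nat set set" and w :: "nat set \<Rightarrow> nat \<Rightarrow> pauli"
  assumes G0: "{} \<in> G" and Gc: "\<forall>g\<in>G. \<forall>h\<in>G. sd g h \<in> G"
    and wm: "\<forall>g\<in>G. \<forall>h\<in>G. w (sd g h) = wmul (w g) (w h)"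
    and cm: "\<forall>g\<in>G. \<forall>h\<in>G. even (card {a\<in>{..<n}. anti (w g a) (w h a)})"
    and idt: "\<forall>g\<in>G. (\<forall>a. w g a = PI) \<longrightarrow> g = {}"
    and supp: "\<forall>g\<in>G. \<forall>a. n \<le> a \<longrightarrow> w g a = PI"
  shows "\<exists>R1 R2. R1 \<inter> R2 = {} \<and> R1 \<union> R2 \<subseteq> {..<n} \<and>
     bij_betw (\<lambda>g. {a\<in>R1 \<union> R2. anti (w g a) (if a \<in> R1 then PZ else PX)}) G (Pow (R1 \<union> R2))"
proof -
  define Xs where "Xs g = {a\<in>{..<n}. xb (w g a)}" for g
  define Zs where "Zs g = {a\<in>{..<n}. zb (w g a)}" for g
  have Xsd: "Xs (sd g h) = sd (Xs g) (Xs h)" if "g \<in> G" "h \<in> G" for g h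
  proof -
    have "w (sd g h) = wmul (w g) (w h)" using wm that by blast
    then show ?thesis unfolding Xs_def sd_def wmul_def by auto
  qed
  have Zsd: "Zs (sd g h) = sd (Zs g) (Zs h)" if "g \<in> G" "h \<in> G" for g h
  proof -
    have "w (sd g h) = wmul (w g) (w h)" using wm that by blast
    then show ?thesis unfolding Zs_def sd_def wmul_def by auto
  qed
  have triv: "g = {}" if "g \<in> G" "Xs g = {}" "Zs g = {}" for g
  proof -
    have "w g a = PI" for a
    proof (cases "a < n")
      case True
      then have "\<not> xb (w g a)" "\<not> zb (w g a)" using that by (auto simp: Xs_def Zs_def)
      then show ?thesis by (intro letter_eqI) auto
    next
      case False then show ?thesis using supp that(1) by auto
    qed
    then show ?thesis using idt that(1) by auto
  qed
  have w0: "w {} = (\<lambda>_. PI)"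
  proof -
    have "w {} = wmul (w {}) (w {})" using wm G0 by (metis sd_self)
    then have "w {} a = lmul (w {} a) (w {} a)" for a by (metis wmul_def)
    then show ?thesis by auto
  qed
  have X0: "Xs {} = {}" and Z0: "Zs {} = {}" by (auto simp: Xs_def Zs_def w0)
  obtain R1 where R1: "R1 \<subseteq> {..<n}" "bij_betw (\<lambda>s. s \<inter> R1) (Xs ` G) (Pow R1)"
  proof -
    have "Xs ` G \<subseteq> Pow {..<n}" by (auto simp: Xs_def)
    moreover have "{} \<in> Xs ` G" using G0 X0 by force
    moreover have "\<forall>s\<in>Xs ` G. \<forall>t\<in>Xs ` G. sd s t \<in> Xs ` G"
    proof (intro ballI)
      fix s t assume "s \<in> Xs ` G" "t \<in> Xs ` G"
      then obtain g h where "g \<in> G" "h \<in> G" "s = Xs g" "t = Xs h" by blast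
      then show "sd s t \<in> Xs ` G" using Xsd Gc by (metis image_eqI)
    qed
    ultimately show ?thesis using subspace_pivot[of "{..<n}" "Xs ` G"] that by blast
  qed
  have X_inj: "Xs g = Xs h" if "g \<in> G" "h \<in> G" "Xs g \<inter> R1 = Xs h \<inter> R1" for g h
    using R1(2) that unfolding bij_betw_def inj_on_def by blast
  have X_surj: "\<exists>g\<in>G. Xs g \<inter> R1 = A" if "A \<subseteq> R1" for A
  proof -
    have "A \<in> (\<lambda>s. s \<inter> R1) ` Xs ` G" using R1(2) that by (simp add: bij_betw_def)
    then show ?thesis by auto
  qed
  define K where "K = {g\<in>G. Xs g = {}}"
  have K0: "{} \<in> K" using G0 X0 by (simp add: K_def)
  have Kc: "sd g h \<in> K" if "g \<in> K" "h \<in> K" for g h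
  proof -
    have "g \<in> G" "h \<in> G" "Xs g = {}" "Xs h = {}" using that by (auto simp: K_def)
    then show ?thesis using Gc Xsd[of g h] by (simp add: K_def)
  qed
  have KZ_inj: "g = h" if "g \<in> K" "h \<in> K" "Zs g - R1 = Zs h - R1" for g h
  proof -
    define u where "u = sd g h"
    have uK: "u \<in> K" using Kc that by (simp add: u_def)
    have uG: "u \<in> G" and uX: "Xs u = {}" using uK by (auto simp: K_def)
    have Zu: "Zs u \<subseteq> R1" using that Zsd[of g h] by (auto simp: u_def K_def sd_def)
    have "Zs u = {}"
    proof (rule ccontr)
      assume "Zs u \<noteq> {}"
      then obtain a where a: "a \<in> Zs u" by auto
      then have aR: "a \<in> R1" using Zu by auto
      obtain v where v: "v \<in> G" "Xs v \<inter> R1 = {a}" using X_surj[of "{a}"] aR by auto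
      have "{b\<in>{..<n}. anti (w u b) (w v b)} = Zs u \<inter> Xs v"
        using uX by (auto simp: anti_def Xs_def Zs_def)
      also have "\<dots> = Zs u \<inter> (Xs v \<inter> R1)" using Zu by auto
      also have "\<dots> = {a}" using v a by auto
      finally have "card {b\<in>{..<n}. anti (w u b) (w v b)} = 1" by simp
      moreover have "even (card {b\<in>{..<n}. anti (w u b) (w v b)})" using cm uG v(1) by blast
      ultimately show False by simp
    qed
    then have "u = {}" using triv uG uX by auto
    then show ?thesis by (simp add: u_def sd_eq_empty)
  qed
  obtain R2 where R2: "R2 \<subseteq> {..<n} - R1" "bij_betw (\<lambda>s. s \<inter> R2) ((\<lambda>g. Zs g - R1) ` K) (Pow R2)"
  proof -
    have "(\<lambda>g. Zs g - R1) ` K \<subseteq> Pow ({..<n} - R1)" by (auto simp: Zs_def)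
    moreover have "{} \<in> (\<lambda>g. Zs g - R1) ` K" using K0 Z0 by force
    moreover have "\<forall>s\<in>(\<lambda>g. Zs g - R1) ` K. \<forall>t\<in>(\<lambda>g. Zs g - R1) ` K. sd s t \<in> (\<lambda>g. Zs g - R1) ` K"
    proof (intro ballI)
      fix s t assume "s \<in> (\<lambda>g. Zs g - R1) ` K" "t \<in> (\<lambda>g. Zs g - R1) ` K"
      then obtain g h where gh: "g \<in> K" "h \<in> K" "s = Zs g - R1" "t = Zs h - R1" by auto
      then have "sd s t = Zs (sd g h) - R1" using Zsd[of g h] by (auto simp: K_def sd_def)
      then show "sd s t \<in> (\<lambda>g. Zs g - R1) ` K" using Kc gh by auto
    qed
    ultimately show ?thesis using subspace_pivot[of "{..<n} - R1" "(\<lambda>g. Zs g - R1) ` K"] that by blast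
  qed
  have R2Z: "(Zs g - R1) \<inter> R2 = Zs g \<inter> R2" for g using R2(1) by auto
  have Z_inj: "g = h" if "g \<in> K" "h \<in> K" "Zs g \<inter> R2 = Zs h \<inter> R2" for g h
  proof -
    have i: "inj_on (\<lambda>s. s \<inter> R2) ((\<lambda>g. Zs g - R1) ` K)" using R2(2) by (simp add: bij_betw_def)
    have m: "Zs g - R1 \<in> (\<lambda>g. Zs g - R1) ` K" "Zs h - R1 \<in> (\<lambda>g. Zs g - R1) ` K" using that by auto
    have "(Zs g - R1) \<inter> R2 = (Zs h - R1) \<inter> R2" using that(3) R2Z by simp
    then have "Zs g - R1 = Zs h - R1" using inj_onD[OF i _ m] by simp
    then show ?thesis using KZ_inj that by blast
  qed
  have Z_surj: "\<exists>k\<in>K. Zs k \<inter> R2 = A" if "A \<subseteq> R2" for A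
  proof -
    have "A \<in> (\<lambda>s. s \<inter> R2) ` (\<lambda>g. Zs g - R1) ` K" using R2(2) that by (simp add: bij_betw_def)
    then show ?thesis using R2Z by auto
  qed
  define L where "L a = (if a \<in> R1 then PZ else PX)" for a
  have dis: "R1 \<inter> R2 = {}" using R2(1) by auto
  have sub: "R1 \<union> R2 \<subseteq> {..<n}" using R1(1) R2(1) by auto
  have psi: "{a\<in>R1 \<union> R2. anti (w g a) (if a \<in> R1 then PZ else PX)} = (Xs g \<inter> R1) \<union> (Zs g \<inter> R2)" for g
  proof -
    have "a \<in> R1 \<union> R2 \<and> anti (w g a) (if a \<in> R1 then PZ else PX) \<longleftrightarrow> a \<in> (Xs g \<inter> R1) \<union> (Zs g \<inter> R2)" for a
    proof (cases "a \<in> R1")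
      case True then show ?thesis using sub dis by (auto simp: anti_Z Xs_def)
    next
      case False then show ?thesis using sub by (auto simp: anti_X Zs_def)
    qed
    then show ?thesis by blast
  qed
  have inj: "inj_on (\<lambda>g. (Xs g \<inter> R1) \<union> (Zs g \<inter> R2)) G"
  proof (rule inj_onI)
    fix g h assume g: "g \<in> G" and h: "h \<in> G" and e: "(Xs g \<inter> R1) \<union> (Zs g \<inter> R2) = (Xs h \<inter> R1) \<union> (Zs h \<inter> R2)"
    have "Xs g \<inter> R1 = Xs h \<inter> R1" using e dis by blast
    then have "Xs g = Xs h" using X_inj g h by blast
    then have uK: "sd g h \<in> K" using Xsd[OF g h] Gc g h by (simp add: K_def)
    have "Zs g \<inter> R2 = Zs h \<inter> R2" using e dis by blast
    then have "Zs (sd g h) \<inter> R2 = Zs {} \<inter> R2" using Zsd[OF g h] Z0 by (auto simp: sd_def)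
    then have "sd g h = {}" using Z_inj uK K0 by blast
    then show "g = h" by (simp add: sd_eq_empty)
  qed
  have surj: "(\<lambda>g. (Xs g \<inter> R1) \<union> (Zs g \<inter> R2)) ` G = Pow (R1 \<union> R2)"
  proof
    show "(\<lambda>g. (Xs g \<inter> R1) \<union> (Zs g \<inter> R2)) ` G \<subseteq> Pow (R1 \<union> R2)" by auto
  next
    show "Pow (R1 \<union> R2) \<subseteq> (\<lambda>g. (Xs g \<inter> R1) \<union> (Zs g \<inter> R2)) ` G"
    proof
      fix A assume A: "A \<in> Pow (R1 \<union> R2)"
      obtain g where g: "g \<in> G" "Xs g \<inter> R1 = A \<inter> R1" using X_surj[of "A \<inter> R1"] by auto
      obtain k where k: "k \<in> K" "Zs k \<inter> R2 = sd (Zs g \<inter> R2) (A \<inter> R2)"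
        using Z_surj[of "sd (Zs g \<inter> R2) (A \<inter> R2)"] by (auto simp: sd_def)
      have kG: "k \<in> G" and kX: "Xs k = {}" using k(1) by (auto simp: K_def)
      have hG: "sd g k \<in> G" using Gc g(1) kG by blast
      have "Xs (sd g k) = Xs g" using Xsd[OF g(1) kG] kX by simp
      moreover have "Zs (sd g k) \<inter> R2 = A \<inter> R2"
        using Zsd[OF g(1) kG] k(2) by (auto simp: sd_def)
      ultimately have "(Xs (sd g k) \<inter> R1) \<union> (Zs (sd g k) \<inter> R2) = A" using g(2) A by auto
      then show "A \<in> (\<lambda>g. (Xs g \<inter> R1) \<union> (Zs g \<inter> R2)) ` G" using hG by force
    qed
  qed
  have "bij_betw (\<lambda>g. {a\<in>R1 \<union> R2. anti (w g a) (if a \<in> R1 then PZ else PX)}) G (Pow (R1 \<union> R2))"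
    unfolding psi bij_betw_def using inj surj by blast
  then show ?thesis using dis sub by blast
qed



lemma cnj_letter: "cnj (letter_ph p b) = letter_ph p (fl p b)"
  by (cases p; cases b; simp add: fl_def letter_flips_def)

lemma cnj_word: "cnj (word_ph n w y) = word_ph n w (flip_cfg w y)"
  by (simp add: word_ph_def flip_cfg_fl cnj_letter)

lemma op_scale: "pauli_op n P (\<lambda>y. c * \<phi> y) = (\<lambda>y. c * pauli_op n P \<phi> y)"
  by (auto simp: pauli_op_def)

lemma op_PI: "pauli_op n (0, \<lambda>_. PI) \<psi> = \<psi>"
  by (simp add: pauli_op_def word_ph_def flip_cfg_def letter_flips_def)

lemma finite_cfgs: "finite R \<Longrightarrow> finite (cfgs R)"
proof -
  assume "finite R"
  have "cfgs R \<subseteq> (\<lambda>A a. a \<in> A) ` Pow R" 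
  proof
    fix x assume "x \<in> cfgs R"
    then have "x = (\<lambda>a. a \<in> {a. x a})" "{a. x a} \<in> Pow R" by (auto simp: cfgs_def)
    then show "x \<in> (\<lambda>A a. a \<in> A) ` Pow R" by blast
  qed
  then show ?thesis using \<open>finite R\<close> finite_subset by blast
qed

lemma card_cfgs: "finite R \<Longrightarrow> card (cfgs R) = 2 ^ card R"
proof -
  assume f: "finite R"
  have "bij_betw (\<lambda>x. {a. x a}) (cfgs R) (Pow R)"
    by (rule bij_betw_byWitness[where f' = "\<lambda>A a. a \<in> A"]) (auto simp: cfgs_def)
  then show ?thesis using f by (simp add: bij_betw_same_card card_Pow)
qed

lemma cfgs_iff: "x \<in> cfgs R \<longleftrightarrow> (\<forall>a. a \<notin> R \<longrightarrow> \<not> x a)"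
  unfolding cfgs_def by blast

lemma flip_cfgs: "(\<forall>b. b \<notin> R \<longrightarrow> w b = PI) \<Longrightarrow> (flip_cfg w x \<in> cfgs R) = (x \<in> cfgs R)"
proof -
  assume h: "\<forall>b. b \<notin> R \<longrightarrow> w b = PI"
  have "\<forall>a. a \<notin> R \<longrightarrow> flip_cfg w x a = x a" using h by (simp add: flip_cfg_def letter_flips_def)
  then show ?thesis unfolding cfgs_iff by metis
qed

lemma op_states: "(\<forall>b. b \<notin> R \<longrightarrow> w b = PI) \<Longrightarrow> \<psi> \<in> states_on R \<Longrightarrow> pauli_op n (0, w) \<psi> \<in> states_on R"
  unfolding states_on_def pauli_op_def using flip_cfgs[of R w] by simp

lemma selfadj:
  assumes sw: "\<forall>b. b \<notin> R \<longrightarrow> w b = PI"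
  shows "inner_on R (pauli_op n (0, w) \<phi>) \<psi> = inner_on R \<phi> (pauli_op n (0, w) \<psi>)"
proof -
  let ?f = "flip_cfg w"
  have bij: "bij_betw ?f (cfgs R) (cfgs R)"
    by (rule bij_betw_byWitness[where f' = ?f]) (auto simp: flip_cfgs[OF sw])
  have "inner_on R (pauli_op n (0, w) \<phi>) \<psi> = (\<Sum>x\<in>cfgs R. cnj (word_ph n w (?f x) * \<phi> (?f x)) * \<psi> x)"
    by (simp add: inner_on_def pauli_op_def)
  also have "\<dots> = (\<Sum>y\<in>cfgs R. cnj (word_ph n w (?f (?f y)) * \<phi> (?f (?f y))) * \<psi> (?f y))"
    using sum.reindex_bij_betw[OF bij, of "\<lambda>x. cnj (word_ph n w (?f x) * \<phi> (?f x)) * \<psi> x"] by simp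
  also have "\<dots> = (\<Sum>y\<in>cfgs R. cnj (\<phi> y) * (word_ph n w (?f y) * \<psi> (?f y)))"
    by (simp add: cnj_word mult_ac)
  also have "\<dots> = inner_on R \<phi> (pauli_op n (0, w) \<psi>)"
    by (simp add: inner_on_def pauli_op_def)
  finally show ?thesis .
qed

lemma inner_scale: "inner_on R \<phi> (\<lambda>y. c * \<psi> y) = c * inner_on R \<phi> \<psi>"
  by (simp add: inner_on_def sum_distrib_left mult_ac)

lemma sum_fun_apply': "(\<Sum>i\<in>A. f i) x = (\<Sum>i\<in>A. f i x)"
  by (induct A rule: infinite_finite_induct) auto

lemma inner_sum: "inner_on R \<phi> (\<Sum>i\<in>A. f i) = (\<Sum>i\<in>A. inner_on R \<phi> (f i))"
  by (simp add: inner_on_def sum_fun_apply' sum_distrib_left sum.swap[of _ A])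

lemma pc_mem: "pc n w w' \<in> {1, -1, \<i>, -\<i>}"
proof -
  have "finite A \<Longrightarrow> (\<Prod>a\<in>A. lc (w a) (w' a)) \<in> {1, -1, \<i>, -\<i>}" for A :: "nat set"
  proof (induct A rule: finite_induct)
    case empty then show ?case by simp
  next
    case (insert a A)
    have "lc (w a) (w' a) \<in> {1, -1, \<i>, -\<i>}" by (cases "w a"; cases "w' a"; simp)
    then show ?case using insert by auto
  qed
  then show ?thesis by (simp add: pc_def)
qed



lemma gmul_sd: "gmul g h = sd g h" by (simp add: gmul_def sd_def)

lemma op_comp_gen: "pauli_op n (l, w) (pauli_op n (l', w') \<psi>) = (\<lambda>y. (\<i> ^ l * \<i> ^ l' * pc n w w') * pauli_op n (0, wmul w w') \<psi> y)"
  by (simp add: op_lam[of n l] op_lam[of n l'] op_scale op_comp0 mult_ac)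

lemma wmul_valid: "\<forall>a. n \<le> a \<longrightarrow> w a = PI \<Longrightarrow> \<forall>a. n \<le> a \<longrightarrow> w' a = PI \<Longrightarrow> \<forall>a. n \<le> a \<longrightarrow> wmul w w' a = PI"
  by (simp add: wmul_def)

lemma hom_words:
  assumes vg: "valid_pstring n (U g)" and vh: "valid_pstring n (U h)" and vgh: "valid_pstring n (U gh)"
    and hom: "pauli_op n (U g) \<circ> pauli_op n (U h) = pauli_op n (U gh)"
  shows "wmul (snd (U g)) (snd (U h)) = snd (U gh) \<and>
         \<i> ^ fst (U g) * \<i> ^ fst (U h) * pc n (snd (U g)) (snd (U h)) = \<i> ^ fst (U gh)"
proof -
  obtain lg wg where g: "U g = (lg, wg)" by (cases "U g")
  obtain lh wh where h: "U h = (lh, wh)" by (cases "U h")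
  obtain l w where gh: "U gh = (l, w)" by (cases "U gh")
  have "(\<lambda>y. (\<i> ^ lg * \<i> ^ lh * pc n wg wh) * pauli_op n (0, wmul wg wh) \<psi> y) = (\<lambda>y. \<i> ^ l * pauli_op n (0, w) \<psi> y)" for \<psi>
  proof -
    have "pauli_op n (U g) (pauli_op n (U h) \<psi>) = pauli_op n (U gh) \<psi>" using hom by (metis comp_apply)
    then show ?thesis unfolding g h gh op_comp_gen op_lam[of n l] .
  qed
  moreover have "\<forall>a. n \<le> a \<longrightarrow> wmul wg wh a = PI" using vg vh g h by (simp add: valid_pstring_def wmul_def)
  moreover have "\<forall>a. n \<le> a \<longrightarrow> w a = PI" using vgh gh by (simp add: valid_pstring_def)
  moreover have "\<i> ^ lg * \<i> ^ lh * pc n wg wh \<noteq> 0" by simp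
  ultimately have "wmul wg wh = w \<and> \<i> ^ lg * \<i> ^ lh * pc n wg wh = \<i> ^ l"
    using extract_word by blast
  then show ?thesis using g h gh by simp
qed

lemma i_pow_sq: "(l::nat) < 4 \<Longrightarrow> \<i> ^ l * \<i> ^ l = 1 \<Longrightarrow> l = 0 \<or> l = 2"
proof -
  assume "l < 4" "\<i> ^ l * \<i> ^ l = 1"
  then have "l = 0 \<or> l = 1 \<or> l = 2 \<or> l = 3" by auto
  then show ?thesis using \<open>\<i> ^ l * \<i> ^ l = 1\<close> by (auto simp: numeral_3_eq_3 numeral_2_eq_2)
qed

lemma derive_hyps:
  fixes n m :: nat and U :: "nat set \<Rightarrow> pstring"
  assumes valid: "\<forall>g\<in>Z2grp m. valid_pstring n (U g)"
    and unit: "U {} = identity_pstring"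
    and hom: "\<forall>g\<in>Z2grp m. \<forall>h\<in>Z2grp m.
                 pauli_op n (U g) \<circ> pauli_op n (U h) = pauli_op n (U (gmul g h))"
    and faithful: "inj_on (\<lambda>g. pauli_op n (U g)) (Z2grp m)"
    and no_minus: "\<forall>g\<in>Z2grp m. pauli_op n (U g) \<noteq> pauli_op n minus_identity_pstring"
  shows "{} \<in> Z2grp m" "\<forall>g\<in>Z2grp m. \<forall>h\<in>Z2grp m. sd g h \<in> Z2grp m"
    "\<forall>g\<in>Z2grp m. \<forall>h\<in>Z2grp m. snd (U (sd g h)) = wmul (snd (U g)) (snd (U h))"
    "\<forall>g\<in>Z2grp m. \<forall>h\<in>Z2grp m. even (card {a\<in>{..<n}. anti (snd (U g) a) (snd (U h) a)})"
    "\<forall>g\<in>Z2grp m. (\<forall>a. snd (U g) a = PI) \<longrightarrow> g = {}"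
    "\<forall>g\<in>Z2grp m. \<forall>a. n \<le> a \<longrightarrow> snd (U g) a = PI"
proof -
  show G0: "{} \<in> Z2grp m" by (simp add: Z2grp_def)
  show Gc: "\<forall>g\<in>Z2grp m. \<forall>h\<in>Z2grp m. sd g h \<in> Z2grp m" by (auto simp: Z2grp_def sd_def)
  have hw: "wmul (snd (U g)) (snd (U h)) = snd (U (sd g h)) \<and>
         \<i> ^ fst (U g) * \<i> ^ fst (U h) * pc n (snd (U g)) (snd (U h)) = \<i> ^ fst (U (sd g h))"
    if "g \<in> Z2grp m" "h \<in> Z2grp m" for g h
  proof -
    have "sd g h \<in> Z2grp m" using Gc that by blast
    then show ?thesis using hom_words[of n U g h "sd g h"] valid hom that by (simp add: gmul_sd)
  qed
  show "\<forall>g\<in>Z2grp m. \<forall>h\<in>Z2grp m. snd (U (sd g h)) = wmul (snd (U g)) (snd (U h))"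
    using hw by metis
  show "\<forall>g\<in>Z2grp m. \<forall>a. n \<le> a \<longrightarrow> snd (U g) a = PI" using valid by (simp add: valid_pstring_def)
  show "\<forall>g\<in>Z2grp m. \<forall>h\<in>Z2grp m. even (card {a\<in>{..<n}. anti (snd (U g) a) (snd (U h) a)})"
  proof (intro ballI)
    fix g h assume g: "g \<in> Z2grp m" and h: "h \<in> Z2grp m"
    have "sd g h = sd h g" by (rule sd_comm)
    then have "\<i> ^ fst (U g) * \<i> ^ fst (U h) * pc n (snd (U g)) (snd (U h)) = \<i> ^ fst (U h) * \<i> ^ fst (U g) * pc n (snd (U h)) (snd (U g))"
      using hw[OF g h] hw[OF h g] by simp
    then have "pc n (snd (U g)) (snd (U h)) = pc n (snd (U h)) (snd (U g))" by simp
    then show "even (card {a\<in>{..<n}. anti (snd (U g) a) (snd (U h) a)})" by (rule pc_comm_even)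
  qed
  show "\<forall>g\<in>Z2grp m. (\<forall>a. snd (U g) a = PI) \<longrightarrow> g = {}"
  proof (intro ballI impI)
    fix g assume g: "g \<in> Z2grp m" and I: "\<forall>a. snd (U g) a = PI"
    have wI: "snd (U g) = (\<lambda>_. PI)" using I by auto
    have u0: "U {} = (0, \<lambda>_. PI)" using unit by (simp add: identity_pstring_def)
    have "\<i> ^ fst (U g) * \<i> ^ fst (U g) * pc n (snd (U g)) (snd (U g)) = \<i> ^ fst (U (sd g g))"
      using hw[OF g g] by blast
    then have "\<i> ^ fst (U g) * \<i> ^ fst (U g) = 1" using u0 by (simp add: pc_def)
    moreover have "fst (U g) < 4" using valid g by (simp add: valid_pstring_def)
    ultimately have "fst (U g) = 0 \<or> fst (U g) = 2" using i_pow_sq by blast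
    then show "g = {}"
    proof
      assume "fst (U g) = 0"
      then have "U g = U {}" using wI u0 by (metis prod.collapse)
      then show "g = {}" using faithful g G0 by (auto simp: inj_on_def)
    next
      assume "fst (U g) = 2"
      then have "U g = minus_identity_pstring" using wI by (metis prod.collapse minus_identity_pstring_def)
      then show "g = {}" using no_minus g by auto
    qed
  qed
qed



definition sc :: "complex \<Rightarrow> state \<Rightarrow> state" where "sc c f = (\<lambda>x. c * f x)"

lemma vs_sc: "vector_space sc"
  by unfold_locales (auto simp: sc_def fun_eq_iff algebra_simps)

lemma anticomm_op:
  assumes a: "a < n" and an: "anti (w a) p"
  shows "pauli_op n (0, w) (pauli_op n (0, (\<lambda>_. PI)(a := p)) \<phi>) = (\<lambda>y. - pauli_op n (0, (\<lambda>_. PI)(a := p)) (pauli_op n (0, w) \<phi>) y)"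
proof -
  let ?L = "(\<lambda>_. PI)(a := p)"
  have "{b\<in>{..<n}. anti (w b) (?L b)} = {a}" using a an by auto
  then have "pc n w ?L = - pc n ?L w" using pc_swap[of n w ?L] by simp
  moreover have "wmul w ?L = wmul ?L w" by (simp add: wmul_def lmul_comm)
  ultimately show ?thesis by (simp add: op_comp0)
qed

lemma pc_self: "pc n w w = 1" by (simp add: pc_def)

lemma inner_zero: "inner_on R \<phi> 0 = 0" by (simp add: inner_on_def)

lemma spanning:
  fixes R :: "nat set" and G :: "nat set set" and ket :: "nat set \<Rightarrow> state"
  assumes fR: "finite R" and fG: "finite G" and cG: "card G = 2 ^ card R"
    and ks: "\<forall>g\<in>G. ket g \<in> states_on R"
    and on: "\<forall>g\<in>G. \<forall>g'\<in>G. inner_on R (ket g) (ket g') = (if g = g' then 1 else 0)"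
  shows "\<forall>\<psi>\<in>states_on R. \<exists>a :: nat set \<Rightarrow> complex. \<psi> = (\<lambda>x. \<Sum>g\<in>G. a g * ket g x)"
proof
  fix \<psi> assume \<psi>: "\<psi> \<in> states_on R"
  interpret vs: vector_space sc by (rule vs_sc)
  have kinj: "inj_on ket G"
  proof (rule inj_onI)
    fix g h assume g: "g \<in> G" and h: "h \<in> G" and e: "ket g = ket h"
    have "inner_on R (ket g) (ket h) = 1" using on g h e by (metis (full_types))
    then show "g = h" using on g h by (metis zero_neq_one)
  qed
  define B where "B = ket ` G"
  have fB: "finite B" using fG by (simp add: B_def)
  have cB: "card B = 2 ^ card R" using kinj cG by (simp add: B_def card_image)
  have onB: "inner_on R x v = (if x = v then 1 else 0)" if "x \<in> B" "v \<in> B" for x v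
    using that on kinj unfolding B_def by (auto simp: inj_on_def)
  have indB: "vs.independent B"
  proof (rule vs.independent_if_scalars_zero[OF fB])
    fix f x assume s: "(\<Sum>x\<in>B. sc (f x) x) = 0" and x: "x \<in> B"
    have "0 = inner_on R x (\<Sum>v\<in>B. sc (f v) v)" using s by (simp add: inner_zero)
    also have "\<dots> = (\<Sum>v\<in>B. f v * inner_on R x v)" by (simp add: inner_sum sc_def inner_scale)
    also have "\<dots> = (\<Sum>v\<in>B. if v = x then f v else 0)" using onB x by (intro sum.cong) auto
    also have "\<dots> = f x" using fB x by simp
    finally show "f x = 0" by simp
  qed
  define \<delta> where "\<delta> x0 = (\<lambda>x. if x = x0 then (1::complex) else 0)" for x0 :: "nat \<Rightarrow> bool"
  define D where "D = \<delta> ` cfgs R"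
  have fD: "finite D" using finite_cfgs[OF fR] by (simp add: D_def)
  have cD: "card D \<le> 2 ^ card R" using card_image_le[OF finite_cfgs[OF fR], of \<delta>] card_cfgs[OF fR] by (simp add: D_def)
  have spD: "\<phi> \<in> vs.span D" if "\<phi> \<in> states_on R" for \<phi>
  proof -
    have "\<phi> = (\<Sum>x0\<in>cfgs R. sc (\<phi> x0) (\<delta> x0))"
    proof
      fix y
      have "(\<Sum>x0\<in>cfgs R. sc (\<phi> x0) (\<delta> x0)) y = (\<Sum>x0\<in>cfgs R. if y = x0 then \<phi> x0 else 0)"
        by (simp add: sum_fun_apply' sc_def \<delta>_def if_distrib cong: if_cong)
      also have "\<dots> = \<phi> y" using finite_cfgs[OF fR] that by (auto simp: states_on_def)
      finally show "\<phi> y = (\<Sum>x0\<in>cfgs R. sc (\<phi> x0) (\<delta> x0)) y" by simp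
    qed
    also have "\<dots> \<in> vs.span D"
      by (intro vs.span_sum vs.span_scale vs.span_base) (auto simp: D_def)
    finally show ?thesis .
  qed
  have "\<psi> \<in> vs.span B"
  proof (rule ccontr)
    assume n: "\<psi> \<notin> vs.span B"
    then have "\<psi> \<notin> B" using vs.span_base by blast
    have "vs.independent (insert \<psi> B)" using vs.independent_insertI[OF n indB] .
    moreover have "insert \<psi> B \<subseteq> vs.span D" using spD \<psi> ks by (auto simp: B_def)
    ultimately have "card (insert \<psi> B) \<le> card D" using vs.independent_span_bound[OF fD] by blast
    moreover have "card (insert \<psi> B) = 2 ^ card R + 1" using fB cB \<open>\<psi> \<notin> B\<close> by simp
    ultimately show False using cD by simp
  qed
  then obtain u where u: "\<psi> = (\<Sum>v\<in>B. sc (u v) v)" using vs.span_finite[OF fB] by auto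
  also have "\<dots> = (\<Sum>g\<in>G. sc (u (ket g)) (ket g))" unfolding B_def using sum.reindex[OF kinj] by simp
  finally have "\<psi> = (\<lambda>x. \<Sum>g\<in>G. u (ket g) * ket g x)" by (simp add: fun_eq_iff sum_fun_apply' sc_def)
  then show "\<exists>a :: nat set \<Rightarrow> complex. \<psi> = (\<lambda>x. \<Sum>g\<in>G. a g * ket g x)" by (intro exI[of _ "\<lambda>g. u (ket g)"]) simp
qed



lemma word_single: "a < n \<Longrightarrow> word_ph n ((\<lambda>_. PI)(a := p)) y = letter_ph p (y a)"
proof -
  assume a: "a < n"
  have "(\<Prod>c\<in>{..<n}-{a}. letter_ph (((\<lambda>_. PI)(a := p)) c) (y c)) = 1"
    by (rule prod.neutral) auto
  then show ?thesis using word_split[OF a, of "(\<lambda>_. PI)(a := p)" y] by simp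
qed

lemma flip_single: "flip_cfg ((\<lambda>_. PI)(a := p)) y = (if letter_flips p then y(a := \<not> y a) else y)"
  by (auto simp: flip_cfg_def letter_flips_def fun_eq_iff)

lemma inner_neg: "inner_on R \<phi> (\<lambda>y. - \<psi> y) = - inner_on R \<phi> \<psi>"
  using inner_scale[of R \<phi> "-1" \<psi>] by simp

theorem mainTheorem3:
  fixes n k :: nat and U :: "nat set \<Rightarrow> pstring"
  assumes kn: "k \<le> n"
    and valid: "\<forall>g\<in>Z2grp (n - k). valid_pstring n (U g)"
    and unit: "U {} = identity_pstring"
    and hom: "\<forall>g\<in>Z2grp (n - k). \<forall>h\<in>Z2grp (n - k).
                 pauli_op n (U g) \<circ> pauli_op n (U h) = pauli_op n (U (gmul g h))"
    and faithful: "inj_on (\<lambda>g. pauli_op n (U g)) (Z2grp (n - k))"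
    and no_minus: "\<forall>g\<in>Z2grp (n - k). pauli_op n (U g) \<noteq> pauli_op n minus_identity_pstring"
  shows "\<exists>R. R \<subseteq> {..<n} \<and> card R = n - k \<and>
    (let G = Z2grp (n - k); UR = (\<lambda>g. pauli_op n (restrict_pstring R (U g))) in
     \<exists>c :: nat set \<Rightarrow> nat set \<Rightarrow> complex.
       inj_on UR G \<and>
       (\<forall>g\<in>G. \<forall>g'\<in>G. c g g' \<in> {1, -1, \<i>, -\<i>} \<and>
           UR g \<circ> UR g' = (\<lambda>\<psi> y. c g g' * UR (gmul g g') \<psi> y)) \<and>
       (\<exists>e \<in> states_on R.
          let ket = (\<lambda>g. UR g e) in
          (\<forall>g\<in>G. \<forall>g'\<in>G. inner_on R (ket g) (ket g') = (if g = g' then 1 else 0)) \<and>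
          (\<forall>\<psi>\<in>states_on R. \<exists>a :: nat set \<Rightarrow> complex.
               \<psi> = (\<lambda>x. \<Sum>g\<in>G. a g * ket g x)) \<and>
          (\<forall>g\<in>G. \<forall>g'\<in>G. UR g (ket g') = (\<lambda>x. c g g' * ket (gmul g g') x))))"
proof -
  define G where "G = Z2grp (n - k)"
  note hy = derive_hyps[where n=n and m="n - k" and U=U, OF valid unit hom faithful no_minus]
  obtain R1 R2 where RR: "R1 \<inter> R2 = {}" "R1 \<union> R2 \<subseteq> {..<n}"
    "bij_betw (\<lambda>g. {a\<in>R1 \<union> R2. anti (snd (U g) a) (if a \<in> R1 then PZ else PX)}) G (Pow (R1 \<union> R2))"
    using pauli_select[of "Z2grp (n - k)" "\<lambda>g. snd (U g)" n, OF hy] unfolding G_def by blast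
  define R where "R = R1 \<union> R2"
  define L where "L a = (if a \<in> R1 then PZ else PX)" for a
  define psi where "psi g = {a\<in>R. anti (snd (U g) a) (L a)}" for g
  have bij: "bij_betw psi G (Pow R)" using RR(3) unfolding psi_def L_def R_def .
  have Rn: "R \<subseteq> {..<n}" using RR(2) by (simp add: R_def)
  have fR: "finite R" using Rn finite_subset by blast
  have fG: "finite G" by (simp add: G_def Z2grp_def)
  have cG: "card G = 2 ^ (n - k)" by (simp add: G_def Z2grp_def card_Pow)
  have "card G = 2 ^ card R" using bij_betw_same_card[OF bij] fR by (simp add: card_Pow)
  then have cardR: "card R = n - k" using cG by simp
  have cG2: "card G = 2 ^ card R" using cG cardR by simp
  have G0: "{} \<in> G" and Gc: "\<forall>g\<in>G. \<forall>h\<in>G. sd g h \<in> G" using hy(1,2) by (simp_all add: G_def)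
  have wm: "snd (U (sd g h)) = wmul (snd (U g)) (snd (U h))" if "g \<in> G" "h \<in> G" for g h
    using hy(3) that by (simp add: G_def)
  have w0: "snd (U {}) = (\<lambda>_. PI)"
    using unit by (simp add: identity_pstring_def)
  define wR where "wR g = (\<lambda>a. if a \<in> R then snd (U g) a else PI)" for g
  define UR where "UR g = pauli_op n (restrict_pstring R (U g))" for g
  have UR_alt: "UR g = pauli_op n (0, wR g)" for g
    by (simp add: UR_def wR_def restrict_pstring_def)
  define c where "c g g' = pc n (wR g) (wR g')" for g g'
  have suppR: "\<forall>b. b \<notin> R \<longrightarrow> wR g b = PI" for g by (simp add: wR_def)
  have validR: "\<forall>b. n \<le> b \<longrightarrow> wR g b = PI" for g using Rn by (auto simp: wR_def)
  have wR_mul: "wmul (wR g) (wR h) = wR (sd g h)" if "g \<in> G" "h \<in> G" for g h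
    using wm[OF that] by (simp add: fun_eq_iff wmul_def wR_def)
  have wR0: "wR {} = (\<lambda>_. PI)" using w0 by (simp add: wR_def fun_eq_iff)
  have comp: "UR g \<circ> UR h = (\<lambda>\<psi> y. c g h * UR (gmul g h) \<psi> y)" if "g \<in> G" "h \<in> G" for g h
    by (rule ext) (simp add: UR_alt op_comp0 wR_mul[OF that] c_def gmul_sd)
  have injUR: "inj_on UR G"
  proof (rule inj_onI)
    fix g h assume g: "g \<in> G" and h: "h \<in> G" and e: "UR g = UR h"
    have E: "(\<lambda>y. 1 * pauli_op n (0, wR g) \<psi> y) = (\<lambda>y. 1 * pauli_op n (0, wR h) \<psi> y)" for \<psi>
      using e by (simp add: UR_alt)
    have "wR g = wR h" using extract_word[OF validR[of g] validR[of h] _ E] by simp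
    then have "psi g = psi h" unfolding psi_def wR_def by (metis (no_types, lifting))
    then show "g = h" using bij g h by (auto simp: bij_betw_def inj_on_def)
  qed
  define s where "s = complex_of_real (1 / sqrt (2 ^ card R2))"
  define e where "e = (\<lambda>x. if x \<in> cfgs R2 then s else 0)"
  have R2R: "R2 \<subseteq> R" by (simp add: R_def)
  have fR2: "finite R2" using fR R2R finite_subset by blast
  have cfgs_mono: "cfgs R2 \<subseteq> cfgs R" using R2R by (auto simp: cfgs_def)
  have e_st: "e \<in> states_on R" using cfgs_mono by (auto simp: states_on_def e_def)
  have ee: "inner_on R e e = 1"
  proof -
    have "inner_on R e e = (\<Sum>x\<in>cfgs R. if x \<in> cfgs R2 then cnj s * s else 0)"
      unfolding inner_on_def e_def by (intro sum.cong) auto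
    also have "\<dots> = (\<Sum>x\<in>{x\<in>cfgs R. x \<in> cfgs R2}. cnj s * s)"
      using sum.inter_filter[OF finite_cfgs[OF fR], of "\<lambda>_. cnj s * s" "\<lambda>x. x \<in> cfgs R2"] by simp
    also have "{x\<in>cfgs R. x \<in> cfgs R2} = cfgs R2" using cfgs_mono by auto
    also have "(\<Sum>x\<in>cfgs R2. cnj s * s) = of_nat (2 ^ card R2) * (cnj s * s)"
      using card_cfgs[OF fR2] by simp
    also have "cnj s * s = complex_of_real (1 / 2 ^ card R2)"
    proof -
      have "sqrt (2 ^ card R2) * sqrt (2 ^ card R2) = (2::real) ^ card R2" by simp
      then have "complex_of_real (sqrt (2 ^ card R2)) * complex_of_real (sqrt (2 ^ card R2)) = 2 ^ card R2"
        by (metis of_real_mult of_real_numeral of_real_power)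
      then show ?thesis by (simp add: s_def power_divide)
    qed
    also have "of_nat (2 ^ card R2) * complex_of_real (1 / 2 ^ card R2) = 1"
      by (simp add: of_real_divide)
    finally show ?thesis .
  qed
  have Le: "pauli_op n (0, (\<lambda>_. PI)(a := L a)) e = e" if a: "a \<in> R" for a
  proof
    fix y
    have an: "a < n" using a Rn by auto
    show "pauli_op n (0, (\<lambda>_. PI)(a := L a)) e y = e y"
    proof (cases "a \<in> R1")
      case True
      then have "a \<notin> R2" using RR(1) by auto
      then have "e y \<noteq> 0 \<Longrightarrow> \<not> y a" by (auto simp: e_def cfgs_def split: if_splits)
      then show ?thesis using True an
        by (auto simp: pauli_op_def L_def flip_single word_single letter_flips_def)
    next
      case False
      then have a2: "a \<in> R2" using a by (simp add: R_def)
      have "(y(a := \<not> y a) \<in> cfgs R2) = (y \<in> cfgs R2)" using a2 by (auto simp: cfgs_def)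
      then show ?thesis using False an
        by (simp add: pauli_op_def L_def flip_single word_single letter_flips_def e_def)
    qed
  qed
  have orth0: "inner_on R e (UR u e) = 0" if u: "u \<in> G" "u \<noteq> {}" for u
  proof -
    have p0: "psi {} = {}" using w0 by (simp add: psi_def)
    have "psi u \<noteq> psi {}" using bij u G0 by (auto simp: bij_betw_def inj_on_def)
    then obtain a where a: "a \<in> R" "anti (snd (U u) a) (L a)" using p0 by (auto simp: psi_def)
    have an: "a < n" using a Rn by auto
    have aw: "anti (wR u a) (L a)" using a by (simp add: wR_def)
    let ?Lop = "pauli_op n (0, (\<lambda>_. PI)(a := L a))"
    have sL: "\<forall>b. b \<notin> R \<longrightarrow> ((\<lambda>_. PI)(a := L a)) b = PI" using a by auto
    have sa: "inner_on R (?Lop e) (UR u e) = inner_on R e (?Lop (UR u e))" by (rule selfadj[OF sL])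
    have "inner_on R e (UR u e) = inner_on R e (UR u (?Lop e))" using Le[OF a(1)] by simp
    also have "\<dots> = inner_on R e (\<lambda>y. - ?Lop (UR u e) y)"
      unfolding UR_alt using anticomm_op[where w="wR u" and p="L a", OF an aw] by simp
    also have "inner_on R e (\<lambda>y. - ?Lop (UR u e) y) = - inner_on R (?Lop e) (UR u e)"
      unfolding sa by (rule inner_neg)
    also have "\<dots> = - inner_on R e (UR u e)" using Le[OF a(1)] by simp
    finally show ?thesis by simp
  qed
  have on: "\<forall>g\<in>G. \<forall>g'\<in>G. inner_on R (UR g e) (UR g' e) = (if g = g' then 1 else 0)"
  proof (intro ballI)
    fix g g' assume g: "g \<in> G" and g': "g' \<in> G"
    have "inner_on R (UR g e) (UR g' e) = inner_on R e (UR g (UR g' e))"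
      unfolding UR_alt by (rule selfadj[OF suppR])
    also have "UR g (UR g' e) = (\<lambda>y. c g g' * UR (sd g g') e y)"
      using fun_cong[OF comp[OF g g'], of e] by (simp add: gmul_sd)
    also have "inner_on R e \<dots> = c g g' * inner_on R e (UR (sd g g') e)" by (rule inner_scale)
    finally have *: "inner_on R (UR g e) (UR g' e) = c g g' * inner_on R e (UR (sd g g') e)" .
    show "inner_on R (UR g e) (UR g' e) = (if g = g' then 1 else 0)"
    proof (cases "g = g'")
      case True
      then show ?thesis using * ee by (simp add: c_def pc_self UR_alt wR0 op_PI)
    next
      case False
      then have "sd g g' \<noteq> {}" by (simp add: sd_eq_empty)
      moreover have "sd g g' \<in> G" using Gc g g' by blast
      ultimately show ?thesis using * orth0 False by simp
    qed
  qed
  have ks: "\<forall>g\<in>G. UR g e \<in> states_on R" using op_states[OF suppR e_st] by (simp add: UR_alt)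
  have span: "\<forall>\<psi>\<in>states_on R. \<exists>a :: nat set \<Rightarrow> complex. \<psi> = (\<lambda>x. \<Sum>g\<in>G. a g * UR g e x)"
    using spanning[OF fR fG cG2 ks on] .
  have trans: "\<forall>g\<in>G. \<forall>g'\<in>G. UR g (UR g' e) = (\<lambda>x. c g g' * UR (gmul g g') e x)"
    using comp by (metis comp_apply)
  have cm: "\<forall>g\<in>G. \<forall>g'\<in>G. c g g' \<in> {1, -1, \<i>, -\<i>} \<and> UR g \<circ> UR g' = (\<lambda>\<psi> y. c g g' * UR (gmul g g') \<psi> y)"
    using comp pc_mem by (simp add: c_def)
  have main: "inj_on UR G \<and> (\<forall>g\<in>G. \<forall>g'\<in>G. c g g' \<in> {1, -1, \<i>, -\<i>} \<and> UR g \<circ> UR g' = (\<lambda>\<psi> y. c g g' * UR (gmul g g') \<psi> y))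
     \<and> (\<exists>e \<in> states_on R. (\<forall>g\<in>G. \<forall>g'\<in>G. inner_on R (UR g e) (UR g' e) = (if g = g' then 1 else 0)) \<and>
          (\<forall>\<psi>\<in>states_on R. \<exists>a :: nat set \<Rightarrow> complex. \<psi> = (\<lambda>x. \<Sum>g\<in>G. a g * UR g e x)) \<and>
          (\<forall>g\<in>G. \<forall>g'\<in>G. UR g (UR g' e) = (\<lambda>x. c g g' * UR (gmul g g') e x)))"
    using injUR cm on span trans e_st by blast
  show ?thesis
    unfolding Let_def
    apply (rule exI[of _ R])
    apply (intro conjI Rn cardR)
    apply (rule exI[of _ c])
    using main unfolding UR_def G_def by blast
qed


end
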